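(* For every $n\ge 2$ and every proper ideal $\Delta\subset B_n$, the Bier sphere $\mathrm{Bier}(B_n,\Delta)$ is a shellable simplicial complex (of dimension $n-2$).
   Context: $B_n$ is the Boolean lattice of all subsets of $[1,n]=\{1,\dots,n\}$. A proper ideal $\Delta\subset B_n$ is a nonempty family of subsets of $[1,n]$ closed under taking subsets with $[1,n]\notin\Delta$ (an abstract simplicial complex with $\emptyset\in\Delta$). The Bier sphere $\mathrm{Bier}(B_n,\Delta)$ is the simplicial complex whose faces are the pairs $(B,C)$ with $B\subsetneq C\subseteq[1,n]$, $B\in\Delta$, $C\notin\Delta$, with $(B',C')$ a face of $(B,C)$ iff $B'\subseteq B$ and $C\subseteq C'$; concretely $(B,C)$ is the vertex set $B\sqcup\{\bar d: d\in[1,n]\setminus C\}$ on the vertex set $[1,n]\sqcup\{\bar1,\dots,\bar n\}$ (the deleted join of $\Delta$ with its Alexander dual). The face $(B,C)$ has $|B|+n-|C|$ vertices. Its facets are the pairs $(A;x):=(A,A\cup\{x\})$ with $A\in\Delta$, $x\notin A$, $A\cup\{x\}\notin\Delta$; each has $n-1$ vertices. A pure simplicial complex is shellable if its facets can be ordered $F_1,F_2,\dots$ so that for each $k\ge2$ the intersection of $F_k$ with $F_1\cup\dots\cup F_{k-1}$ (as subcomplexes) is pure of dimension $\dim F_k-1$. *)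

theory Defs
  imports Main
begin

text \<open>Vertices: Inl i stands for i, Inr d stands for the barred vertex of d.\<close>

definition bier :: "nat \<Rightarrow> nat set set \<Rightarrow> (nat + nat) set set" where
  "bier n \<Delta> = {Inl ` B \<union> Inr ` ({1..n} - C) | B C.
       B \<subset> C \<and> C \<subseteq> {1..n} \<and> B \<in> \<Delta> \<and> C \<notin> \<Delta>}"

definition simplicial_complex :: "'a set set \<Rightarrow> bool" where
  "simplicial_complex K \<longleftrightarrow> finite K \<and> (\<forall>F\<in>K. finite F) \<and> (\<forall>F\<in>K. \<forall>G. G \<subseteq> F \<longrightarrow> G \<in> K)"

definition facets :: "'a set set \<Rightarrow> 'a set set" where
  "facets K = {F \<in> K. \<forall>G\<in>K. F \<subseteq> G \<longrightarrow> G = F}"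

text \<open>Pure with all facets having m vertices (i.e. pure of dimension m - 1).\<close>
definition pure_card :: "'a set set \<Rightarrow> nat \<Rightarrow> bool" where
  "pure_card K m \<longleftrightarrow> (\<forall>F\<in>facets K. card F = m)"

text \<open>Shelling order: for k \<ge> 2 (0-based index k \<ge> 1) the subcomplex of faces of F_k
  lying in some earlier facet is pure of dimension dim F_k - 1.\<close>
definition shellable :: "'a set set \<Rightarrow> bool" where
  "shellable K \<longleftrightarrow> (\<exists>m. pure_card K m) \<and>
     (\<exists>fs. distinct fs \<and> set fs = facets K \<and>
        (\<forall>k. 0 < k \<and> k < length fs \<longrightarrow>
           pure_card {G. G \<subseteq> fs ! k \<and> (\<exists>j<k. G \<subseteq> fs ! j)} (card (fs ! k) - 1)))"

end

theory Submission imports Defs begin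

definition fac :: "nat \<Rightarrow> nat set \<Rightarrow> nat \<Rightarrow> (nat + nat) set" where
  "fac n A x = Inl ` A \<union> Inr ` ({1..n} - insert x A)"

definition dig :: "nat \<Rightarrow> nat set \<Rightarrow> nat \<Rightarrow> nat \<Rightarrow> nat" where
  "dig n A x m = (if m = 0 then n - card A else if m = x then 1 else if m \<in> A \<and> x < m then 2 else 0)"

definition rk :: "nat \<Rightarrow> nat set \<Rightarrow> nat \<Rightarrow> nat" where
  "rk n A x = (\<Sum>m\<le>n. dig n A x m * (n+3)^m)"

lemma low_bound:
  fixes d :: "nat \<Rightarrow> nat"
  shows "(\<forall>m<k. d m < W) \<Longrightarrow> (\<Sum>m<k. d m * W^m) < W^k"
proof (induction k)
  case 0 then show ?case by simp
next
  case (Suc k)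
  then have IH: "(\<Sum>m<k. d m * W^m) < W^k" and dk: "d k < W" by auto
  have "(\<Sum>m<Suc k. d m * W^m) = (\<Sum>m<k. d m * W^m) + d k * W^k" by simp
  also have "\<dots> < W^k + d k * W^k" using IH by simp
  also have "\<dots> = (1 + d k) * W^k" by simp
  also have "\<dots> \<le> W * W^k" using dk by (intro mult_right_mono) auto
  finally show ?case by simp
qed

lemma val_less:
  fixes d e :: "nat \<Rightarrow> nat"
  assumes "k \<le> n" "\<forall>m<k. d m < W" "d k < e k" "\<forall>m. k<m \<and> m \<le> n \<longrightarrow> d m \<le> e m"
  shows "(\<Sum>m\<le>n. d m * W^m) < (\<Sum>m\<le>n. e m * W^m)"
  using assms(1,4)
proof (induction n rule: dec_induct)
  case base
  have "(\<Sum>m\<le>k. d m * W^m) = (\<Sum>m<k. d m * W^m) + d k * W^k"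
    by (simp add: lessThan_Suc_atMost[symmetric])
  also have "\<dots> < W^k + d k * W^k" using low_bound[of k d W] assms(2) by simp
  also have "\<dots> = (1 + d k) * W^k" by simp
  also have "\<dots> \<le> e k * W^k" using assms(3) by (intro mult_right_mono) auto
  also have "\<dots> \<le> (\<Sum>m\<le>k. e m * W^m)"
    by (simp add: lessThan_Suc_atMost[symmetric])
  finally show ?case .
next
  case (step n)
  then have "(\<Sum>m\<le>n. d m * W^m) < (\<Sum>m\<le>n. e m * W^m)" by auto
  moreover have "d (Suc n) * W^(Suc n) \<le> e (Suc n) * W^(Suc n)"
    using step by (intro mult_right_mono) auto
  ultimately show ?case unfolding sum.atMost_Suc by linarith
qed

lemma dig_lt: "dig n A x m < n + 3"
  unfolding dig_def by auto

lemma rk_less: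
  assumes "k \<le> n" "dig n A x k < dig n A' x' k"
    "\<forall>m. k<m \<and> m \<le> n \<longrightarrow> dig n A x m \<le> dig n A' x' m"
  shows "rk n A x < rk n A' x'"
  unfolding rk_def using val_less[OF assms(1) _ assms(2,3)] dig_lt by blast

lemma P1a:
  assumes "a \<in> A" "x < a" "a \<le> n"
  shows "rk n (A - {a}) x < rk n A x"
  by (rule rk_less[where k=a]) (use assms in \<open>auto simp: dig_def\<close>)

lemma P1b:
  assumes "a \<in> A" "x < a" "a \<le> n"
  shows "rk n (insert x (A - {a})) a < rk n A x"
  by (rule rk_less[where k=a]) (use assms in \<open>auto simp: dig_def\<close>)

lemma P2a:
  assumes "b \<notin> A" "b < x" "x \<le> n" "x \<notin> A"
  shows "rk n A b < rk n A x"
  by (rule rk_less[where k=x]) (use assms in \<open>auto simp: dig_def\<close>)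

lemma P2b:
  assumes "b \<notin> A" "b < x" "x \<notin> A" "A \<subseteq> {1..n}" "x \<in> {1..n}"
  shows "rk n (insert b A) x < rk n A x"
proof (rule rk_less[where k=0])
  have "A \<subseteq> {1..n} - {x}" using assms by auto
  then have "card A \<le> card ({1..n} - {x})" by (intro card_mono) auto
  then have "card A < n" using assms by auto
  moreover have "finite A" using assms(4) finite_subset by blast
  ultimately show "dig n (insert b A) x 0 < dig n A x 0"
    using assms by (auto simp: dig_def)
qed (use assms in \<open>auto simp: dig_def\<close>)

lemma P3:
  assumes A: "A \<subseteq> {1..n}" "x \<in> {1..n}" "x \<notin> A"
    and A': "A' \<subseteq> {1..n}" "x' \<in> {1..n}" "x' \<notin> A'"
    and nsub: "\<not> insert x' A' \<subseteq> A"
    and ne: "(A, x) \<noteq> (A', x')"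
    and le: "rk n A' x' \<le> rk n A x"
  shows "(\<exists>a\<in>A. a \<notin> A' \<and> x < a) \<or> (\<exists>b\<in>insert x' A'. b \<notin> insert x A \<and> b < x)"
proof (rule ccontr)
  assume "\<not> ?thesis"
  then have NA: "\<And>a. a \<in> A \<Longrightarrow> x < a \<Longrightarrow> a \<in> A'"
    and NB: "\<And>b. b \<in> insert x' A' \<Longrightarrow> b < x \<Longrightarrow> b \<in> A" by auto
  have up: "\<forall>m. k<m \<and> m \<le> n \<longrightarrow> dig n A x m \<le> dig n A' x' m" if "x' \<le> k" "x \<le> k" for k
    using that NA by (auto simp: dig_def)
  have "rk n A x < rk n A' x'"
  proof (cases "x < x'")
    case True
    have "x' \<notin> A" using NA A' True by blast
    show ?thesis
      by (rule rk_less[where k=x']) (use True \<open>x' \<notin> A\<close> A' up[of x'] in \<open>auto simp: dig_def\<close>)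
  next
    case False
    show ?thesis
    proof (cases "\<exists>m. x < m \<and> m \<in> A' \<and> m \<notin> A")
      case True
      then obtain m where m: "x < m" "m \<in> A'" "m \<notin> A" by blast
      show ?thesis
        by (rule rk_less[where k=m]) (use False m A' up[of m] in \<open>auto simp: dig_def\<close>)
    next
      case noM: False
      show ?thesis
      proof (cases "x' = x")
        case True
        have "A' \<subseteq> A"
        proof
          fix y assume y: "y \<in> A'"
          then have "y \<noteq> x" using A' True by auto
          then show "y \<in> A"
            using NB[of y] noM y by (cases "y < x") auto
        qed
        moreover have "A' \<noteq> A" using ne True by auto
        ultimately have "A' \<subset> A" by auto
        moreover have "finite A" using A(1) finite_subset by blast
        ultimately have c: "card A' < card A" by (rule psubset_card_mono[rotated])
        have "A \<subseteq> {1..n} - {x}" using A by auto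
        then have "card A \<le> card ({1..n} - {x})" by (intro card_mono) auto
        then have "card A < n" using A by auto
        have "dig n A x 0 < dig n A' x' 0" using c \<open>card A < n\<close> by (simp add: dig_def)
        moreover have "\<forall>m. 0<m \<and> m \<le> n \<longrightarrow> dig n A x m \<le> dig n A' x' m"
          using True NA by (auto simp: dig_def)
        ultimately show ?thesis by (intro rk_less[where k=0]) auto
      next
        case False
        with \<open>\<not> x < x'\<close> have lt: "x' < x" by auto
        show ?thesis
        proof (cases "x \<in> A'")
          case True
          show ?thesis
            by (rule rk_less[where k=x]) (use True lt A up[of x] in \<open>auto simp: dig_def\<close>)
        next
          case False
          have "insert x' A' \<subseteq> A"
          proof
            fix y assume y: "y \<in> insert x' A'"
            show "y \<in> A"
            proof (cases "y < x")
              case True then show ?thesis using NB y by auto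
            next
              case False
              then have "y \<in> A'" using y lt by auto
              then have "x < y" using False \<open>x \<notin> A'\<close> by (cases "y = x") auto
              then show ?thesis using noM \<open>y \<in> A'\<close> by auto
            qed
          qed
          then show ?thesis using nsub by blast
        qed
      qed
    qed
  qed
  then show False using le by simp
qed

lemma bier_mem: "S \<in> bier n \<Delta> \<longleftrightarrow> (\<exists>B C. S = Inl ` B \<union> Inr ` ({1..n} - C) \<and>
       B \<subset> C \<and> C \<subseteq> {1..n} \<and> B \<in> \<Delta> \<and> C \<notin> \<Delta>)"
  unfolding bier_def by blast

context
  fixes n :: nat and \<Delta> :: "nat set set"
  assumes sub: "\<Delta> \<subseteq> Pow {1..n}"
    and down: "\<forall>A\<in>\<Delta>. \<forall>B. B \<subseteq> A \<longrightarrow> B \<in> \<Delta>"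
begin

lemma down': "A \<in> \<Delta> \<Longrightarrow> B \<subseteq> A \<Longrightarrow> B \<in> \<Delta>"
  using down by blast

lemma sc: "simplicial_complex (bier n \<Delta>)"
  unfolding simplicial_complex_def
proof (intro conjI ballI allI impI)
  have "bier n \<Delta> \<subseteq> Pow (Inl ` {1..n} \<union> Inr ` {1..n})"
    unfolding bier_def by auto
  then show "finite (bier n \<Delta>)" by (rule finite_subset) auto
next
  fix F assume "F \<in> bier n \<Delta>"
  then have "F \<subseteq> Inl ` {1..n} \<union> Inr ` {1..n}" unfolding bier_def by auto
  then show "finite F" by (rule finite_subset) auto
next
  fix F G assume F: "F \<in> bier n \<Delta>" and G: "G \<subseteq> F"
  then obtain B C where BC: "F = Inl ` B \<union> Inr ` ({1..n} - C)" "B \<subset> C" "C \<subseteq> {1..n}"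
    "B \<in> \<Delta>" "C \<notin> \<Delta>" unfolding bier_mem by blast
  define B' where "B' = {b. Inl b \<in> G}"
  define C' where "C' = {1..n} - {c. Inr c \<in> G}"
  have eq: "G = Inl ` B' \<union> Inr ` ({1..n} - C')"
  proof
    show "G \<subseteq> Inl ` B' \<union> Inr ` ({1..n} - C')"
    proof
      fix v assume v: "v \<in> G"
      show "v \<in> Inl ` B' \<union> Inr ` ({1..n} - C')"
      proof (cases v)
        case (Inl b) then show ?thesis using v B'_def by auto
      next
        case (Inr c) then have "c \<in> {1..n}" using v G BC(1) by auto
        then show ?thesis using v Inr C'_def by auto
      qed
    qed
  next
    show "Inl ` B' \<union> Inr ` ({1..n} - C') \<subseteq> G" unfolding B'_def C'_def by auto
  qed
  have "B' \<subseteq> B" using G BC(1) B'_def by auto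
  moreover have "C \<subseteq> C'" using G BC(1,3) C'_def by auto
  ultimately have "B' \<subset> C'" using BC(2) by blast
  moreover have "C' \<notin> \<Delta>" using down' \<open>C \<subseteq> C'\<close> BC(5) by blast
  moreover have "B' \<in> \<Delta>" using down' \<open>B' \<subseteq> B\<close> BC(4) by blast
  moreover have "C' \<subseteq> {1..n}" using C'_def by auto
  ultimately show "G \<in> bier n \<Delta>" unfolding bier_mem using eq by blast
qed

definition isf :: "nat set \<Rightarrow> nat \<Rightarrow> bool" where
  "isf A x \<longleftrightarrow> A \<in> \<Delta> \<and> x \<in> {1..n} \<and> x \<notin> A \<and> insert x A \<notin> \<Delta>"

lemma isf_sub: "isf A x \<Longrightarrow> A \<subseteq> {1..n}"
  unfolding isf_def using sub by auto

lemma fac_in: "isf A x \<Longrightarrow> fac n A x \<in> bier n \<Delta>"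
  unfolding bier_mem fac_def
  apply (rule exI[of _ A], rule exI[of _ "insert x A"])
  using isf_sub[of A x] by (auto simp: isf_def)

lemma face_in_fac:
  assumes "S \<in> bier n \<Delta>"
  shows "\<exists>A x. isf A x \<and> S \<subseteq> fac n A x"
proof -
  obtain B C where BC: "S = Inl ` B \<union> Inr ` ({1..n} - C)" "B \<subset> C" "C \<subseteq> {1..n}"
    "B \<in> \<Delta>" "C \<notin> \<Delta>" using assms unfolding bier_mem by blast
  define P where "P = {A. B \<subseteq> A \<and> A \<subseteq> C \<and> A \<in> \<Delta>}"
  have "finite C" using BC(3) finite_subset by blast
  moreover have "P \<subseteq> Pow C" unfolding P_def by blast
  ultimately have "finite P" using finite_subset by blast
  moreover have "B \<in> P" using BC P_def by auto
  ultimately obtain A where A: "A \<in> P" and Amax: "\<forall>A'\<in>P. A \<subseteq> A' \<longrightarrow> A' = A"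
    using finite_has_maximal[of P] by blast
  have "A \<noteq> C" using A BC(5) P_def by auto
  then obtain x where x: "x \<in> C" "x \<notin> A" using A P_def by blast
  have "insert x A \<notin> \<Delta>"
  proof
    assume "insert x A \<in> \<Delta>"
    then have "insert x A \<in> P" using A x P_def by auto
    then show False using Amax x by blast
  qed
  then have "isf A x" using A x BC(3) P_def by (auto simp: isf_def)
  moreover have "S \<subseteq> fac n A x" using BC(1) A x P_def by (auto simp: fac_def)
  ultimately show ?thesis by blast
qed

lemma fac_max:
  assumes "isf A x" "S \<in> bier n \<Delta>" "fac n A x \<subseteq> S"
  shows "S = fac n A x"
proof -
  obtain B C where BC: "S = Inl ` B \<union> Inr ` ({1..n} - C)" "B \<subset> C" "C \<subseteq> {1..n}"
    "B \<in> \<Delta>" "C \<notin> \<Delta>" using assms(2) unfolding bier_mem by blast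
  have AB: "A \<subseteq> B" using assms(3) BC(1) by (auto simp: fac_def)
  have CA: "C \<subseteq> insert x A"
  proof
    fix c assume c: "c \<in> C"
    show "c \<in> insert x A"
    proof (rule ccontr)
      assume "c \<notin> insert x A"
      then have "Inr c \<in> fac n A x" using c BC(3) by (auto simp: fac_def)
      then have "Inr c \<in> S" using assms(3) by auto
      then show False using BC(1) c by auto
    qed
  qed
  have "x \<in> C"
  proof (rule ccontr)
    assume "x \<notin> C" then have "C \<subseteq> A" using CA by auto
    then show False using AB BC(2) by auto
  qed
  have "B = A"
  proof (rule ccontr)
    assume "B \<noteq> A"
    then obtain y where "y \<in> B" "y \<notin> A" using AB by auto
    then have "y = x" using BC(2) CA by auto
    then have "C \<subseteq> B" using CA AB \<open>y \<in> B\<close> by auto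
    then show False using BC(2) by auto
  qed
  moreover have "C = insert x A" using CA \<open>x \<in> C\<close> BC(2) \<open>B = A\<close> by auto
  ultimately show ?thesis using BC(1) by (simp add: fac_def)
qed

lemma facets_eq: "facets (bier n \<Delta>) = {fac n A x | A x. isf A x}"
proof
  show "facets (bier n \<Delta>) \<subseteq> {fac n A x | A x. isf A x}"
  proof
    fix F assume F: "F \<in> facets (bier n \<Delta>)"
    then have "F \<in> bier n \<Delta>" by (simp add: facets_def)
    then obtain A x where "isf A x" "F \<subseteq> fac n A x" using face_in_fac by blast
    moreover have "fac n A x \<in> bier n \<Delta>" using fac_in[OF \<open>isf A x\<close>] .
    ultimately have "fac n A x = F" using F unfolding facets_def by blast
    then show "F \<in> {fac n A x | A x. isf A x}" using \<open>isf A x\<close> by blast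
  qed
next
  show "{fac n A x | A x. isf A x} \<subseteq> facets (bier n \<Delta>)"
  proof
    fix F assume "F \<in> {fac n A x | A x. isf A x}"
    then obtain A x where F: "F = fac n A x" "isf A x" by blast
    show "F \<in> facets (bier n \<Delta>)" unfolding facets_def
      using fac_in[OF F(2)] fac_max[OF F(2)] F(1) by blast
  qed
qed

lemma card_fac:
  assumes "isf A x" shows "card (fac n A x) = n - 1"
proof -
  have A: "A \<subseteq> {1..n}" using isf_sub[OF assms] .
  have fA: "finite A" using A finite_subset by blast
  have "card (fac n A x) = card (Inl ` A :: (nat + nat) set) + card (Inr ` ({1..n} - insert x A) :: (nat + nat) set)"
    unfolding fac_def by (rule card_Un_disjoint) (use fA in \<open>auto\<close>)
  also have "\<dots> = card A + card ({1..n} - insert x A)"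
    by (simp add: card_image)
  also have "card ({1..n} - insert x A) = n - card (insert x A)"
    using A assms by (subst card_Diff_subset) (auto simp: isf_def intro: finite_subset)
  also have "card (insert x A) = card A + 1" using fA assms by (simp add: isf_def)
  finally show ?thesis
  proof -
    have "insert x A \<subseteq> {1..n}" using A assms by (auto simp: isf_def)
    then have "card (insert x A) \<le> card {1..n}" by (intro card_mono) auto
    then have "card (insert x A) \<le> n" by simp
    then show "card (fac n A x) = card A + (n - (card A + 1)) \<Longrightarrow> card (fac n A x) = n - 1"
      using fA assms by (simp add: isf_def)
  qed
qed


definition key :: "(nat + nat) set \<Rightarrow> nat" where
  "key F = rk n {a. Inl a \<in> F} (THE y. y \<in> {1..n} \<and> Inl y \<notin> F \<and> Inr y \<notin> F)"

lemma key_fac: assumes "isf A x" shows "key (fac n A x) = rk n A x"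
proof -
  have "{a. Inl a \<in> fac n A x} = A" by (auto simp: fac_def)
  moreover have "(THE y. y \<in> {1..n} \<and> Inl y \<notin> fac n A x \<and> Inr y \<notin> fac n A x) = x"
    by (rule the_equality) (use assms in \<open>auto simp: fac_def isf_def\<close>)
  ultimately show ?thesis by (simp add: key_def)
qed

lemma fac_inj: "fac n A x = fac n A' x' \<Longrightarrow> isf A x \<Longrightarrow> isf A' x' \<Longrightarrow> A = A' \<and> x = x'"
proof -
  assume eq: "fac n A x = fac n A' x'" and f: "isf A x" "isf A' x'"
  have "A = A'"
  proof -
    have "A = {a. Inl a \<in> fac n A x}" by (auto simp: fac_def)
    also have "\<dots> = {a. Inl a \<in> fac n A' x'}" using eq by simp
    also have "\<dots> = A'" by (auto simp: fac_def)
    finally show ?thesis .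
  qed
  moreover have "x = x'"
  proof (rule ccontr)
    assume "x \<noteq> x'"
    then have "Inr x' \<in> fac n A x" using f \<open>A = A'\<close> by (auto simp: fac_def isf_def)
    then show False using eq by (auto simp: fac_def)
  qed
  ultimately show ?thesis by simp
qed

lemma neighbor:
  assumes F: "isf A x" and G: "isf A' x'" and ne: "fac n A x \<noteq> fac n A' x'"
    and le: "key (fac n A' x') \<le> key (fac n A x)"
  shows "\<exists>v H. v \<in> fac n A x \<and> v \<notin> fac n A' x' \<and> H \<in> facets (bier n \<Delta>) \<and>
     key H < key (fac n A x) \<and> fac n A x - {v} \<subseteq> H"
proof -
  have As: "A \<subseteq> {1..n}" "A' \<subseteq> {1..n}" using isf_sub F G by auto
  have "\<not> insert x' A' \<subseteq> A"
  proof
    assume "insert x' A' \<subseteq> A"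
    then have "insert x' A' \<in> \<Delta>" using down' F by (auto simp: isf_def)
    then show False using G by (simp add: isf_def)
  qed
  moreover have "(A, x) \<noteq> (A', x')" using ne by auto
  moreover have "rk n A' x' \<le> rk n A x" using le key_fac F G by simp
  ultimately have "(\<exists>a\<in>A. a \<notin> A' \<and> x < a) \<or> (\<exists>b\<in>insert x' A'. b \<notin> insert x A \<and> b < x)"
    using P3[of A n x A' x'] As F G by (auto simp: isf_def)
  then show ?thesis
  proof
    assume "\<exists>a\<in>A. a \<notin> A' \<and> x < a"
    then obtain a where a: "a \<in> A" "a \<notin> A'" "x < a" by blast
    have an: "a \<le> n" using a As by auto
    have v: "Inl a \<in> fac n A x" "Inl a \<notin> fac n A' x'" using a by (auto simp: fac_def)
    have AD: "A - {a} \<in> \<Delta>" using down' F by (auto simp: isf_def)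
    show ?thesis
    proof (cases "insert x (A - {a}) \<in> \<Delta>")
      case False
      have i: "isf (A - {a}) x" using F AD False by (auto simp: isf_def)
      have "key (fac n (A - {a}) x) < key (fac n A x)"
        using key_fac[OF i] key_fac[OF F] P1a[OF a(1,3) an] by simp
      moreover have "fac n A x - {Inl a} \<subseteq> fac n (A - {a}) x" by (auto simp: fac_def)
      ultimately show ?thesis using v facets_eq i by blast
    next
      case True
      have e: "insert a (insert x (A - {a})) = insert x A" using a by auto
      have i: "isf (insert x (A - {a})) a" using F True a As e by (auto simp: isf_def)
      have "key (fac n (insert x (A - {a})) a) < key (fac n A x)"
        using key_fac[OF i] key_fac[OF F] P1b[OF a(1,3) an] by simp
      moreover have "fac n A x - {Inl a} \<subseteq> fac n (insert x (A - {a})) a"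
        using e by (auto simp: fac_def)
      ultimately show ?thesis using v facets_eq i by blast
    qed
  next
    assume "\<exists>b\<in>insert x' A'. b \<notin> insert x A \<and> b < x"
    then obtain b where b: "b \<in> insert x' A'" "b \<notin> insert x A" "b < x" by blast
    have bn: "b \<in> {1..n}" using b As G by (auto simp: isf_def)
    have v: "Inr b \<in> fac n A x" "Inr b \<notin> fac n A' x'" using b bn by (auto simp: fac_def)
    have xn: "x \<le> n" "x \<notin> A" "x \<in> {1..n}" using F by (auto simp: isf_def)
    show ?thesis
    proof (cases "insert b A \<in> \<Delta>")
      case False
      have i: "isf A b" using F False bn b by (auto simp: isf_def)
      have "key (fac n A b) < key (fac n A x)"
        using key_fac[OF i] key_fac[OF F] P2a[of b A x n] b xn by simp
      moreover have "fac n A x - {Inr b} \<subseteq> fac n A b" by (auto simp: fac_def)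
      ultimately show ?thesis using v facets_eq i by blast
    next
      case True
      have "insert x (insert b A) \<notin> \<Delta>"
      proof
        assume "insert x (insert b A) \<in> \<Delta>"
        then have "insert x A \<in> \<Delta>" using down' by blast
        then show False using F by (simp add: isf_def)
      qed
      then have i: "isf (insert b A) x" using F True b by (auto simp: isf_def)
      have "key (fac n (insert b A) x) < key (fac n A x)"
        using key_fac[OF i] key_fac[OF F] P2b[of b A x n] b xn As by simp
      moreover have "fac n A x - {Inr b} \<subseteq> fac n (insert b A) x" by (auto simp: fac_def)
      ultimately show ?thesis using v facets_eq i by blast
    qed
  qed
qed


lemma pure: "pure_card (bier n \<Delta>) (n - 1)"
  unfolding pure_card_def facets_eq using card_fac by blast

lemma shell: "shellable (bier n \<Delta>)"
proof -
  let ?K = "bier n \<Delta>"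
  have "finite (facets ?K)"
    using sc unfolding simplicial_complex_def facets_def by auto
  then obtain L where L: "distinct L" "set L = facets ?K" using finite_distinct_list by blast
  define fs where "fs = sort_key key L"
  have d: "distinct fs" and st: "set fs = facets ?K" using L by (simp_all add: fs_def)
  have so: "sorted (map key fs)" unfolding fs_def by (rule sorted_sort_key)
  have mono: "key (fs ! j) \<le> key (fs ! k)" if "j \<le> k" "k < length fs" for j k
    using sorted_nth_mono[OF so that(1)] that by simp
  have "\<forall>k. 0 < k \<and> k < length fs \<longrightarrow>
           pure_card {G. G \<subseteq> fs ! k \<and> (\<exists>j<k. G \<subseteq> fs ! j)} (card (fs ! k) - 1)"
  proof (intro allI impI)
    fix k assume k: "0 < k \<and> k < length fs"
    let ?S = "{G. G \<subseteq> fs ! k \<and> (\<exists>j<k. G \<subseteq> fs ! j)}"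
    have "fs ! k \<in> facets ?K" using st k by (metis nth_mem)
    then obtain A x where F: "fs ! k = fac n A x" "isf A x" using facets_eq by blast
    show "pure_card ?S (card (fs ! k) - 1)"
      unfolding pure_card_def
    proof
      fix T assume T: "T \<in> facets ?S"
      then have "T \<in> ?S" and Tmax: "\<forall>G\<in>?S. T \<subseteq> G \<longrightarrow> G = T" by (auto simp: facets_def)
      then obtain j where j: "j < k" "T \<subseteq> fs ! j" "T \<subseteq> fs ! k" by blast
      have "fs ! j \<in> facets ?K" using st k j by (metis nth_mem order.strict_trans)
      then obtain A' x' where G: "fs ! j = fac n A' x'" "isf A' x'" using facets_eq by blast
      have "fs ! j \<noteq> fs ! k" using d j k by (simp add: nth_eq_iff_index_eq)
      moreover have "key (fs ! j) \<le> key (fs ! k)" using mono j k by simp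
      ultimately obtain v H where vH: "v \<in> fac n A x" "v \<notin> fac n A' x'" "H \<in> facets ?K"
        "key H < key (fac n A x)" "fac n A x - {v} \<subseteq> H"
        using neighbor[OF F(2) G(2)] F G by metis
      obtain i where i: "i < length fs" "fs ! i = H" using vH(3) st by (metis in_set_conv_nth)
      have "i < k"
      proof (rule ccontr)
        assume "\<not> i < k"
        then have "key (fs ! k) \<le> key (fs ! i)" using mono[of k i] i by simp
        then show False using vH(4) F i by simp
      qed
      then have R: "fs ! k - {v} \<in> ?S" using vH(5) i F by auto
      have "T \<subseteq> fs ! k - {v}" using j vH(2) G F by auto
      then have "T = fs ! k - {v}" using Tmax R by blast
      moreover have "finite (fs ! k)" using sc \<open>fs ! k \<in> facets ?K\<close>
        unfolding simplicial_complex_def facets_def by auto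
      ultimately show "card T = card (fs ! k) - 1" using vH(1) F by simp
    qed
  qed
  then show ?thesis unfolding shellable_def using pure d st by blast
qed

end

theorem theorem7:
  fixes n :: nat and \<Delta> :: "nat set set"
  assumes "n \<ge> 2"
    and "\<Delta> \<noteq> {}"
    and "\<Delta> \<subseteq> Pow {1..n}"
    and "\<forall>A\<in>\<Delta>. \<forall>B. B \<subseteq> A \<longrightarrow> B \<in> \<Delta>"
    and "{1..n} \<notin> \<Delta>"
  shows "simplicial_complex (bier n \<Delta>) \<and> pure_card (bier n \<Delta>) (n - 1) \<and> shellable (bier n \<Delta>)"
  using sc[OF assms(3,4)] pure[OF assms(3,4)] shell[OF assms(3,4)] by blast

end
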